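(* In the root system $B_n$, every quartet $\{r_1, r, s, s_1\}$ is a mono-quartet, i.e. the vectors $s - r_1$ and $r - r_1$ are never both roots.
   Context: Fix simple roots of $B_n$; the height of a root is the sum of its coefficients in the simple roots. The regular ordering $\prec$ of positive roots orders them by height, and roots of equal height lexicographically by coefficient vectors. An ordered pair $\{r,s\}$ of positive roots is special if $r+s\in\varPhi$ and $0\prec r\prec s$; a special pair $\{r_1,s_1\}$ is extraspecial if $r_1 \preceq r$ for every special pair $\{r,s\}$ with $r+s=r_1+s_1$. A quartet is an ordered set $\{r_1,r,s,s_1\}$ where $\{r_1,s_1\}$ is extraspecial, $\{r,s\}$ is a special, non-extraspecial pair with $r+s=r_1+s_1$, and $0\prec r_1\prec r\prec s\prec s_1$. *)

theory Defs
  imports Main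
begin

text \<open>Root system B_n, realised in Z^n with standard basis e_0,...,e_(n-1)
  (vectors are functions nat => int, zero outside {0..<n}).\<close>

definition unitv :: "nat \<Rightarrow> nat \<Rightarrow> int" where
  "unitv i = (\<lambda>k. if k = i then 1 else 0)"

definition vadd :: "(nat \<Rightarrow> int) \<Rightarrow> (nat \<Rightarrow> int) \<Rightarrow> nat \<Rightarrow> int" where
  "vadd u v = (\<lambda>k. u k + v k)"

definition vsub :: "(nat \<Rightarrow> int) \<Rightarrow> (nat \<Rightarrow> int) \<Rightarrow> nat \<Rightarrow> int" where
  "vsub u v = (\<lambda>k. u k - v k)"

definition rootsB :: "nat \<Rightarrow> (nat \<Rightarrow> int) set" where
  "rootsB n =
     {v. \<exists>i<n. \<exists>a::int. a \<in> {1, -1} \<and> v = (\<lambda>k. a * unitv i k)}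
   \<union> {v. \<exists>i<n. \<exists>j<n. i < j \<and> (\<exists>a b::int. a \<in> {1, -1} \<and> b \<in> {1, -1} \<and>
          v = (\<lambda>k. a * unitv i k + b * unitv j k))}"

definition simple_root :: "nat \<Rightarrow> nat \<Rightarrow> nat \<Rightarrow> int" where
  "simple_root n k = (if k + 1 < n then vsub (unitv k) (unitv (k + 1)) else unitv k)"

text \<open>Coefficient of v at the simple root alpha_k: since e_i = alpha_i + ... + alpha_(n-1),
  v = sum_k (sum_(i<=k) v_i) alpha_k.\<close>

definition coef :: "(nat \<Rightarrow> int) \<Rightarrow> nat \<Rightarrow> int" where
  "coef v k = (\<Sum>i\<le>k. v i)"

definition height :: "nat \<Rightarrow> (nat \<Rightarrow> int) \<Rightarrow> int" where
  "height n v = (\<Sum>k<n. coef v k)"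

definition positive_root :: "nat \<Rightarrow> (nat \<Rightarrow> int) \<Rightarrow> bool" where
  "positive_root n v \<longleftrightarrow> v \<in> rootsB n \<and> (\<forall>k<n. coef v k \<ge> 0)"

definition lex_less :: "nat \<Rightarrow> (nat \<Rightarrow> int) \<Rightarrow> (nat \<Rightarrow> int) \<Rightarrow> bool" where
  "lex_less n u v \<longleftrightarrow> (\<exists>k<n. (\<forall>j<k. coef u j = coef v j) \<and> coef u k < coef v k)"

definition reg_less :: "nat \<Rightarrow> (nat \<Rightarrow> int) \<Rightarrow> (nat \<Rightarrow> int) \<Rightarrow> bool" where
  "reg_less n u v \<longleftrightarrow> height n u < height n v \<or> (height n u = height n v \<and> lex_less n u v)"

definition special :: "nat \<Rightarrow> (nat \<Rightarrow> int) \<Rightarrow> (nat \<Rightarrow> int) \<Rightarrow> bool" where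
  "special n r s \<longleftrightarrow> positive_root n r \<and> positive_root n s \<and> vadd r s \<in> rootsB n \<and> reg_less n r s"

definition extraspecial :: "nat \<Rightarrow> (nat \<Rightarrow> int) \<Rightarrow> (nat \<Rightarrow> int) \<Rightarrow> bool" where
  "extraspecial n r1 s1 \<longleftrightarrow> special n r1 s1 \<and>
     (\<forall>r s. special n r s \<and> vadd r s = vadd r1 s1 \<longrightarrow> r1 = r \<or> reg_less n r1 r)"

definition quartet :: "nat \<Rightarrow> (nat \<Rightarrow> int) \<Rightarrow> (nat \<Rightarrow> int) \<Rightarrow> (nat \<Rightarrow> int) \<Rightarrow> (nat \<Rightarrow> int) \<Rightarrow> bool" where
  "quartet n r1 r s s1 \<longleftrightarrow> extraspecial n r1 s1 \<and> special n r s \<and> \<not> extraspecial n r s \<and>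
     vadd r s = vadd r1 s1 \<and> positive_root n r1 \<and>
     reg_less n r1 r \<and> reg_less n r s \<and> reg_less n s s1"

definition mono_quartet :: "nat \<Rightarrow> (nat \<Rightarrow> int) \<Rightarrow> (nat \<Rightarrow> int) \<Rightarrow> (nat \<Rightarrow> int) \<Rightarrow> (nat \<Rightarrow> int) \<Rightarrow> bool" where
  "mono_quartet n r1 r s s1 \<longleftrightarrow> \<not> (vsub s r1 \<in> rootsB n \<and> vsub r r1 \<in> rootsB n)"

end

theory Submission
  imports Defs
begin

definition nrm :: "nat \<Rightarrow> (nat \<Rightarrow> int) \<Rightarrow> int" where
  "nrm n v = (\<Sum>k<n. v k * v k)"

lemma nrm_root:
  assumes "v \<in> rootsB n"
  shows "nrm n v = 1 \<or> nrm n v = 2"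
proof -
  from assms consider
    (one) i a where "i < n" "a \<in> {1, -1}" "v = (\<lambda>k. a * unitv i k)"
  | (two) i j a b where "i < n" "j < n" "i < j" "a \<in> {1, -1}" "b \<in> {1, -1}"
      "v = (\<lambda>k. a * unitv i k + b * unitv j k)"
    unfolding rootsB_def by blast
  then show ?thesis
  proof cases
    case one
    have "nrm n v = (\<Sum>k<n. if k = i then a * a else 0)"
      unfolding nrm_def one(3) by (intro sum.cong) (auto simp: unitv_def)
    also have "\<dots> = a * a" using one(1) by simp
    finally show ?thesis using one(2) by auto
  next
    case two
    have "nrm n v = (\<Sum>k<n. (if k = i then a * a else 0) + (if k = j then b * b else 0))"
      unfolding nrm_def two(6) using two(3) by (intro sum.cong) (auto simp: unitv_def)
    also have "\<dots> = a * a + b * b" using two(1,2) by (simp add: sum.distrib)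
    finally show ?thesis using two(4,5) by auto
  qed
qed

theorem mainTheorem3:
  fixes n :: nat and r1 r s s1 :: "nat \<Rightarrow> int"
  assumes "2 \<le> n"
    and "quartet n r1 r s s1"
  shows "mono_quartet n r1 r s s1"
proof -
  have q: "positive_root n r1" "positive_root n r" "positive_root n s" "positive_root n s1"
      "vadd r s \<in> rootsB n" "vadd r s = vadd r1 s1"
    using assms(2) unfolding quartet_def extraspecial_def special_def by auto
  have s1: "s1 = (\<lambda>k. r k + s k - r1 k)"
  proof
    fix k show "s1 k = r k + s k - r1 k" using fun_cong[OF q(6), of k] by (simp add: vadd_def)
  qed
  show ?thesis unfolding mono_quartet_def
  proof
    assume h: "vsub s r1 \<in> rootsB n \<and> vsub r r1 \<in> rootsB n"
    define U where "U = (\<Sum>k<n. r1 k * r1 k)"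
    define RR where "RR = (\<Sum>k<n. r k * r k)"
    define SS where "SS = (\<Sum>k<n. s k * s k)"
    define UR where "UR = (\<Sum>k<n. r1 k * r k)"
    define US where "US = (\<Sum>k<n. r1 k * s k)"
    define RS where "RS = (\<Sum>k<n. r k * s k)"
    have n1: "nrm n r1 = U" unfolding nrm_def U_def ..
    have n2: "nrm n r = RR" unfolding nrm_def RR_def ..
    have n3: "nrm n s = SS" unfolding nrm_def SS_def ..
    have n4: "nrm n (vsub r r1) = RR - 2 * UR + U"
      unfolding nrm_def RR_def UR_def U_def vsub_def
      by (simp add: algebra_simps sum.distrib sum_subtractf sum_distrib_left)
    have n5: "nrm n (vsub s r1) = SS - 2 * US + U"
      unfolding nrm_def SS_def US_def U_def vsub_def
      by (simp add: algebra_simps sum.distrib sum_subtractf sum_distrib_left)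
    have n6: "nrm n (vadd r s) = RR + 2 * RS + SS"
      unfolding nrm_def RR_def RS_def SS_def vadd_def
      by (simp add: algebra_simps sum.distrib sum_subtractf sum_distrib_left)
    have n7: "nrm n s1 = RR + SS + U + 2 * RS - 2 * UR - 2 * US"
      unfolding nrm_def RR_def RS_def SS_def U_def UR_def US_def s1
      by (simp add: algebra_simps sum.distrib sum_subtractf sum_distrib_left)
    have "nrm n r1 = 1 \<or> nrm n r1 = 2" using q(1) nrm_root positive_root_def by blast
    moreover have "nrm n r = 1 \<or> nrm n r = 2" using q(2) nrm_root positive_root_def by blast
    moreover have "nrm n s = 1 \<or> nrm n s = 2" using q(3) nrm_root positive_root_def by blast
    moreover have "nrm n s1 = 1 \<or> nrm n s1 = 2" using q(4) nrm_root positive_root_def by blast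
    moreover have "nrm n (vadd r s) = 1 \<or> nrm n (vadd r s) = 2" using q(5) nrm_root by blast
    moreover have "nrm n (vsub r r1) = 1 \<or> nrm n (vsub r r1) = 2" using h nrm_root by blast
    moreover have "nrm n (vsub s r1) = 1 \<or> nrm n (vsub s r1) = 2" using h nrm_root by blast
    ultimately show False unfolding n1 n2 n3 n4 n5 n6 n7 by presburger
  qed
qed

end
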